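(* Let $1<q<2$. Then for every $u\in C^\infty_0(\mathbb{R}^2)$, \[ \mathcal{T}_q\,\left(\int_{\mathbb{R}^2} |u|^\frac{4\,q}{2-q}\, dx\right)^\frac{2-q}{2\,q}\le \left(\int_{\mathbb{R}^2} |u_{x_1}|^2\, dx\right)^\frac{1}{2}\,\left(\int_{\mathbb{R}^2} |u_{x_2}|^q\, dx\right)^\frac{1}{q}, \qquad\text{where }\ \mathcal{T}_q=\frac{(2-q)^2}{4\,q^2-(2-q)^2}>0. \] *)

theory Defs
  imports "HOL-Analysis.Analysis"
begin

text \<open>Functions on R^2 are modelled as functions on real \<times> real; the
first component is x1, the second x2.\<close>

definition partial1 :: "(real \<times> real \<Rightarrow> real) \<Rightarrow> real \<times> real \<Rightarrow> real" where
  "partial1 f = (\<lambda>(x, y). deriv (\<lambda>t. f (t, y)) x)"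

definition partial2 :: "(real \<times> real \<Rightarrow> real) \<Rightarrow> real \<times> real \<Rightarrow> real" where
  "partial2 f = (\<lambda>(x, y). deriv (\<lambda>t. f (x, t)) y)"

fun Ck :: "nat \<Rightarrow> (real \<times> real \<Rightarrow> real) \<Rightarrow> bool" where
  "Ck 0 f = continuous_on UNIV f"
| "Ck (Suc k) f = (f differentiable_on UNIV \<and> Ck k (partial1 f) \<and> Ck k (partial2 f))"

definition smooth2 :: "(real \<times> real \<Rightarrow> real) \<Rightarrow> bool" where
  "smooth2 f = (\<forall>k. Ck k f)"

definition C_infty_0 :: "(real \<times> real \<Rightarrow> real) \<Rightarrow> bool" where
  "C_infty_0 f = (smooth2 f \<and> compact (closure {x. f x \<noteq> 0}))"

end

theory Submission
  imports Defs
begin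


lemma DERIV_abs_powr:
  fixes s r :: real assumes s: "s > 1"
  shows "((\<lambda>y. \<bar>y\<bar> powr s) has_real_derivative (s * \<bar>r\<bar> powr (s - 1) * sgn r)) (at r)"
proof (cases "r > 0")
  case True
  have ev: "eventually (\<lambda>y. \<bar>y\<bar> powr s = y powr s) (nhds r)"
    using eventually_nhds_in_open[of "{0<..}" r] True
    by (auto elim!: eventually_mono)
  show ?thesis
    by (subst DERIV_cong_ev[OF refl ev refl]) (use True has_real_derivative_powr[of r s] in simp)
next
  case False
  show ?thesis
  proof (cases "r < 0")
    case True
    have ev: "eventually (\<lambda>y. \<bar>y\<bar> powr s = (-y) powr s) (nhds r)"
      using eventually_nhds_in_open[of "{..<0}" r] True
      by (auto elim!: eventually_mono)
    have "((\<lambda>y. (-y) powr s) has_real_derivative (s * (-r) powr (s - 1) * (-1))) (at r)"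
      using True by (auto intro!: derivative_eq_intros)
    then show ?thesis
      by (subst DERIV_cong_ev[OF refl ev refl]) (use True in simp)
  next
    case False
    with \<open>\<not> r > 0\<close> have r0: "r = 0" by simp
    have lim: "((\<lambda>y. \<bar>y\<bar> powr (s - 1)) \<longlongrightarrow> 0) (at 0)"
      by (rule tendsto_zero_powrI) (use s in \<open>auto intro!: tendsto_eq_intros\<close>)
    have "((\<lambda>y. (\<bar>y\<bar> powr s - \<bar>0\<bar> powr s) / (y - 0)) \<longlongrightarrow> 0) (at 0)"
    proof (rule Lim_null_comparison[OF _ lim])
      show "\<forall>\<^sub>F x in at 0. norm ((\<bar>x\<bar> powr s - \<bar>0\<bar> powr s) / (x - 0)) \<le> \<bar>x\<bar> powr (s - 1)"
      proof (rule always_eventually, rule allI)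
        fix x :: real
        show "norm ((\<bar>x\<bar> powr s - \<bar>0\<bar> powr s) / (x - 0)) \<le> \<bar>x\<bar> powr (s - 1)"
        proof (cases "x = 0")
          case False
          then have "\<bar>x\<bar> powr s = \<bar>x\<bar> powr (s-1) * \<bar>x\<bar>"
            by (simp add: powr_diff)
          then show ?thesis using False by (simp add: abs_mult)
        qed simp
      qed
    qed
    then show ?thesis using r0 s by (simp add: DERIV_def)
  qed
qed



lemma cs_integrable:
  fixes g :: "'a::euclidean_space \<Rightarrow> real"
  assumes "continuous_on UNIV g" "\<And>z. R < norm z \<Longrightarrow> g z = 0"
  shows "integrable lborel g"
proof -
  have "integrable lborel (\<lambda>z. indicator (cball 0 R) z *\<^sub>R g z)"
    by (rule borel_integrable_compact) (auto intro: continuous_on_subset assms)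
  moreover have "(\<lambda>z. indicator (cball 0 R) z *\<^sub>R g z) = g"
    using assms(2) by (auto simp: fun_eq_iff indicator_def dist_norm)
  ultimately show ?thesis by simp
qed

lemma line_bound:
  fixes v v' :: "real \<Rightarrow> real" and s R x :: real
  assumes s: "s > 1" and dv: "\<And>t. (v has_real_derivative v' t) (at t)"
    and cv': "continuous_on UNIV v'" and supp: "\<And>t. R < \<bar>t\<bar> \<Longrightarrow> v t = 0"
  shows "integrable lborel (\<lambda>t. s * \<bar>v t\<bar> powr (s - 1) * \<bar>v' t\<bar>)"
    and "\<bar>v x\<bar> powr s \<le> (\<integral>t. s * \<bar>v t\<bar> powr (s - 1) * \<bar>v' t\<bar> \<partial>lborel)"
proof -
  define g where "g = (\<lambda>t. s * \<bar>v t\<bar> powr (s - 1) * \<bar>v' t\<bar>)"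
  have cv: "continuous_on UNIV v"
    using dv by (meson DERIV_isCont continuous_at_imp_continuous_on)
  have cg: "continuous_on UNIV g"
    unfolding g_def using s
    by (intro continuous_intros continuous_on_powr' cv cv') auto
  have g0: "g t = 0" if "R < norm t" for t
    using supp[of t] that by (simp add: g_def)
  have gi: "integrable lborel g"
    by (rule cs_integrable[OF cg g0])
  then show "integrable lborel (\<lambda>t. s * \<bar>v t\<bar> powr (s - 1) * \<bar>v' t\<bar>)"
    by (simp add: g_def)
  have gnn: "\<And>t. 0 \<le> g t" using s by (simp add: g_def)
  have "\<bar>v x\<bar> powr s \<le> integral\<^sup>L lborel g"
  proof (cases "R < \<bar>x\<bar>")
    case True
    then show ?thesis using supp[of x] gnn by (simp add: integral_nonneg)
  next
    case False
    define a where "a = - R - 1"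
    have ax: "a \<le> x" using False by (simp add: a_def)
    have va: "v a = 0" using False by (intro supp) (simp add: a_def)
    define f' where "f' = (\<lambda>t. s * \<bar>v t\<bar> powr (s - 1) * sgn (v t) * v' t)"
    have der: "((\<lambda>t. \<bar>v t\<bar> powr s) has_real_derivative f' t) (at t)" for t
      unfolding f'_def using DERIV_chain2[OF DERIV_abs_powr[OF s] dv[of t]] .
    have ftc: "(f' has_integral (\<bar>v x\<bar> powr s - \<bar>v a\<bar> powr s)) {a..x}"
      by (rule fundamental_theorem_of_calculus[OF ax])
         (use der in \<open>auto intro: has_vector_derivative_at_within simp: has_real_derivative_iff_has_vector_derivative\<close>)
    have gint: "(g has_integral integral {a..x} g) {a..x}"
      by (intro integrable_integral integrable_continuous_interval continuous_on_subset[OF cg]) auto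
    have "\<bar>v x\<bar> powr s \<le> integral {a..x} g"
    proof (rule has_integral_le[OF _ gint])
      show "(f' has_integral \<bar>v x\<bar> powr s) {a..x}" using ftc va by simp
      fix t show "f' t \<le> g t"
      proof -
        have "sgn (v t) * v' t \<le> \<bar>v' t\<bar>" by (auto simp: sgn_if)
        then have "(s * \<bar>v t\<bar> powr (s - 1)) * (sgn (v t) * v' t) \<le> (s * \<bar>v t\<bar> powr (s - 1)) * \<bar>v' t\<bar>"
          using s by (intro mult_left_mono) auto
        then show ?thesis unfolding f'_def g_def by (simp add: mult.assoc)
      qed
    qed
    also have "\<dots> \<le> integral UNIV g"
      by (rule integral_subset_le) (use gint has_integral_integral_real[OF gi] gnn in auto)
    also have "\<dots> = integral\<^sup>L lborel g"
      using has_integral_integral_real[OF gi] by (rule integral_unique)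
    finally show ?thesis .
  qed
  then show "\<bar>v x\<bar> powr s \<le> (\<integral>t. s * \<bar>v t\<bar> powr (s - 1) * \<bar>v' t\<bar> \<partial>lborel)"
    by (simp add: g_def)
qed



lemma holder_zero:
  fixes f g :: "'a \<Rightarrow> real"
  assumes p: "p > 0" and nn: "\<And>x. f x \<ge> 0"
    and i: "integrable M (\<lambda>x. f x powr p)" and A0: "(\<integral>x. f x powr p \<partial>M) = 0"
  shows "(\<integral>x. f x * g x \<partial>M) = 0"
proof -
  have "AE x in M. f x powr p = 0"
    using integral_nonneg_eq_0_iff_AE[OF i] A0 by simp
  then have "AE x in M. f x * g x = 0"
    by eventually_elim simp
  then show ?thesis by (rule integral_eq_zero_AE)
qed

lemma holder:
  fixes f g :: "'a \<Rightarrow> real"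
  assumes p: "p > 1" "q > 1" "1/p + 1/q = 1" and nn: "\<And>x. f x \<ge> 0" "\<And>x. g x \<ge> 0"
    and i: "integrable M (\<lambda>x. f x * g x)" "integrable M (\<lambda>x. f x powr p)" "integrable M (\<lambda>x. g x powr q)"
  shows "(\<integral>x. f x * g x \<partial>M) \<le> (\<integral>x. f x powr p \<partial>M) powr (1/p) * (\<integral>x. g x powr q \<partial>M) powr (1/q)"
proof -
  define A where "A = (\<integral>x. f x powr p \<partial>M)"
  define B where "B = (\<integral>x. g x powr q \<partial>M)"
  have A0: "A \<ge> 0" "B \<ge> 0" unfolding A_def B_def by (auto intro: integral_nonneg)
  show ?thesis
  proof (cases "A = 0 \<or> B = 0")
    case True
    then show ?thesis
    proof
      assume "A = 0"
      then show ?thesis using holder_zero[of p f M g] p nn i by (simp add: A_def)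
    next
      assume "B = 0"
      then have "(\<integral>x. g x * f x \<partial>M) = 0" using holder_zero[of q g M f] p nn i by (simp add: B_def)
      then show ?thesis by (simp add: mult.commute)
    qed
  next
    case False
    define a where "a = A powr (1/p)"
    define b where "b = B powr (1/q)"
    have apos: "a > 0" "b > 0" using False A0 by (auto simp: a_def b_def)
    have ap: "a powr p = A" using A0 p by (simp add: a_def powr_powr)
    have bq: "b powr q = B" using A0 p by (simp add: b_def powr_powr)
    have pt: "f x * g x / (a * b) \<le> f x powr p / (p * A) + g x powr q / (q * B)" for x
    proof -
      have "(f x / a) * (g x / b) \<le> (f x / a) powr p / p + (g x / b) powr q / q"
        by (rule Youngs_inequality) (use p nn apos in auto)
      also have "\<dots> = f x powr p / (p * A) + g x powr q / (q * B)"
        using nn apos by (simp add: powr_divide ap bq mult.commute)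
      finally show ?thesis by simp
    qed
    have "(\<integral>x. f x * g x / (a * b) \<partial>M) \<le> (\<integral>x. f x powr p / (p * A) + g x powr q / (q * B) \<partial>M)"
      by (rule integral_mono) (use i pt in auto)
    also have "\<dots> = A / (p * A) + B / (q * B)"
      using i by (simp add: A_def B_def)
    also have "\<dots> = 1" using False p by simp
    finally have "(\<integral>x. f x * g x \<partial>M) / (a * b) \<le> 1" by simp
    then have "(\<integral>x. f x * g x \<partial>M) \<le> a * b" using apos by (simp add: divide_le_eq)
    then show ?thesis by (simp add: a_def b_def A_def B_def)
  qed
qed



lemma deriv_loc_zero:
  fixes f :: "real \<Rightarrow> real"
  assumes d: "(f has_real_derivative D) (at x)" and ev: "eventually (\<lambda>t. f t = 0) (nhds x)"
  shows "D = 0"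
proof -
  have "(f has_real_derivative 0) (at x)"
    by (subst DERIV_cong_ev[OF refl ev refl]) (rule DERIV_const)
  then show ?thesis using d DERIV_unique by blast
qed

lemma C0_facts:
  assumes "C_infty_0 u"
  shows C0_cont: "continuous_on UNIV u"
    and C0_cont1: "continuous_on UNIV (partial1 u)"
    and C0_cont2: "continuous_on UNIV (partial2 u)"
    and C0_d1: "\<And>x y. ((\<lambda>t. u (t, y)) has_real_derivative partial1 u (x, y)) (at x)"
    and C0_d2: "\<And>x y. ((\<lambda>t. u (x, t)) has_real_derivative partial2 u (x, y)) (at y)"
    and C0_supp: "\<exists>R. \<forall>z. R < norm z \<longrightarrow> u z = 0 \<and> partial1 u z = 0 \<and> partial2 u z = 0"
proof -
  have sm: "smooth2 u" and cpt: "compact (closure {x. u x \<noteq> 0})"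
    using assms by (auto simp: C_infty_0_def)
  have "Ck (Suc 0) u" using sm by (simp add: smooth2_def)
  then have du: "u differentiable_on UNIV" and c1: "continuous_on UNIV (partial1 u)"
    and c2: "continuous_on UNIV (partial2 u)" by auto
  show "continuous_on UNIV u" using du by (rule differentiable_imp_continuous_on)
  show "continuous_on UNIV (partial1 u)" by fact
  show "continuous_on UNIV (partial2 u)" by fact
  have dat: "u differentiable (at z)" for z
    using du by (cases z) (simp add: differentiable_on_def)
  show d1: "((\<lambda>t. u (t, y)) has_real_derivative partial1 u (x, y)) (at x)" for x y
  proof -
    have "((\<lambda>t. (t, y)) has_derivative (\<lambda>h. (h, 0))) (at x)"
      by (auto intro!: derivative_eq_intros)
    then have "(\<lambda>t. (t, y)) differentiable (at x)" by (auto simp: differentiable_def)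
    then have "(u \<circ> (\<lambda>t. (t, y))) differentiable (at x)"
      using dat by (rule differentiable_chain_at)
    then show ?thesis
      by (simp add: partial1_def o_def flip: DERIV_deriv_iff_real_differentiable)
  qed
  show d2: "((\<lambda>t. u (x, t)) has_real_derivative partial2 u (x, y)) (at y)" for x y
  proof -
    have "((\<lambda>t. (x, t)) has_derivative (\<lambda>h. (0, h))) (at y)"
      by (auto intro!: derivative_eq_intros)
    then have "(\<lambda>t. (x, t)) differentiable (at y)" by (auto simp: differentiable_def)
    then have "(u \<circ> (\<lambda>t. (x, t))) differentiable (at y)"
      using dat by (rule differentiable_chain_at)
    then show ?thesis
      by (simp add: partial2_def o_def flip: DERIV_deriv_iff_real_differentiable)
  qed
  obtain R where R: "\<And>z. z \<in> closure {x. u x \<noteq> 0} \<Longrightarrow> norm z \<le> R"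
    using compact_imp_bounded[OF cpt] by (auto simp: bounded_iff)
  have u0: "u z = 0" if "R < norm z" for z
    using R[of z] closure_subset[of "{x. u x \<noteq> 0}"] that by force
  have "R < norm z \<longrightarrow> u z = 0 \<and> partial1 u z = 0 \<and> partial2 u z = 0" for z
  proof
    assume z: "R < norm z"
    obtain x y where zxy: "z = (x, y)" by (cases z)
    have o1: "open {t. R < norm (t, y)}"
      by (intro open_Collect_less continuous_intros)
    have o2: "open {t. R < norm (x, t)}"
      by (intro open_Collect_less continuous_intros)
    have e1: "eventually (\<lambda>t. u (t, y) = 0) (nhds x)"
      using eventually_nhds_in_open[OF o1, of x] z zxy by (auto elim!: eventually_mono intro: u0)
    have e2: "eventually (\<lambda>t. u (x, t) = 0) (nhds y)"
      using eventually_nhds_in_open[OF o2, of y] z zxy by (auto elim!: eventually_mono intro: u0)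
    show "u z = 0 \<and> partial1 u z = 0 \<and> partial2 u z = 0"
      using u0[OF z] deriv_loc_zero[OF d1 e1] deriv_loc_zero[OF d2 e2] zxy by simp
  qed
  then show "\<exists>R. \<forall>z. R < norm z \<longrightarrow> u z = 0 \<and> partial1 u z = 0 \<and> partial2 u z = 0" by blast
qed



theorem lemmaB1:
  fixes q :: real and u :: "real \<times> real \<Rightarrow> real"
  assumes "1 < q" and "q < 2" and "C_infty_0 u"
  shows "(2 - q)^2 / (4 * q^2 - (2 - q)^2) > 0 \<and>
    ((2 - q)^2 / (4 * q^2 - (2 - q)^2)) *
      (\<integral>x. \<bar>u x\<bar> powr (4 * q / (2 - q)) \<partial>lborel) powr ((2 - q) / (2 * q))
    \<le> (\<integral>x. \<bar>partial1 u x\<bar> powr 2 \<partial>lborel) powr (1 / 2) *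
       (\<integral>x. \<bar>partial2 u x\<bar> powr q \<partial>lborel) powr (1 / q)"
proof -
  note q1 = assms(1) and q2 = assms(2) and uC = assms(3)
  define p where "p = 4 * q / (2 - q)"
  define s where "s = p / 2 + 1"
  define t where "t = p * (q - 1) / q + 1"
  define q' where "q' = q / (q - 1)"
  define c where "c = (2 - q)^2 / (4 * q^2 - (2 - q)^2)"
  define e where "e = (2 - q) / (2 * q)"
  have pp: "p > 0" using q1 q2 by (simp add: p_def)
  have s1: "s > 1" using pp by (simp add: s_def)
  have t1: "t > 1" using pp q1 by (simp add: t_def)
  have q'1: "q' > 1" using q1 q2 by (simp add: q'_def field_simps)
  have qq': "1 / q' + 1 / q = 1" using q1 by (simp add: q'_def field_simps)
  have pq: "p*(2-q) = 4*q" using q2 by (simp add: p_def)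
  have st: "s + t = p" using pq q1 unfolding s_def t_def by (simp add: field_simps)
  have sp: "(s - 1) * 2 = p" by (simp add: s_def)
  have sp2: "s * 2 - 2 = p" by (simp add: s_def)
  have tp: "(t - 1) * q' = p" using q1 q2 by (simp add: t_def q'_def field_simps)
  have den: "4 * q^2 - (2 - q)^2 = (3 * q - 2) * (q + 2)" by (simp add: power2_eq_square algebra_simps)
  have cpos: "c > 0" using q1 q2 by (simp add: c_def den)
  have ss: "s = (q+2)/(2-q)" using q2 by (simp add: s_def p_def field_simps)
  have tt: "t = (3*q-2)/(2-q)" using q1 q2 by (simp add: t_def p_def field_simps)
  have nz: "3*q-2 \<noteq> 0" "q+2 \<noteq> 0" "2-q \<noteq> 0" using q1 q2 by auto
  have gen: "\<And>a b d::real. a \<noteq> 0 \<Longrightarrow> b \<noteq> 0 \<Longrightarrow> d \<noteq> 0 \<Longrightarrow> d^2/(a*b) * (b/d*(a/d)) = 1"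
    by (simp add: field_simps power2_eq_square)
  have cst: "c * (s * t) = 1" unfolding c_def den ss tt using gen[OF nz] .
  have eexp: "e + 1/2 + 1/q' = 1" using q1 q2 by (simp add: e_def q'_def field_simps)

  define D1 where "D1 = partial1 u"
  define D2 where "D2 = partial2 u"
  have cu: "continuous_on UNIV u" and c1: "continuous_on UNIV D1" and c2: "continuous_on UNIV D2"
    using C0_facts[OF uC] by (auto simp: D1_def D2_def)
  have d1: "\<And>x y. ((\<lambda>t. u (t, y)) has_real_derivative D1 (x, y)) (at x)"
    and d2: "\<And>x y. ((\<lambda>t. u (x, t)) has_real_derivative D2 (x, y)) (at y)"
    using C0_facts[OF uC] by (auto simp: D1_def D2_def)
  obtain R where R: "\<And>z. R < norm z \<Longrightarrow> u z = 0 \<and> D1 z = 0 \<and> D2 z = 0"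
    using C0_facts(6)[OF uC] unfolding D1_def D2_def by blast

  define P where "P = (\<lambda>z. \<bar>u z\<bar> powr p)"
  define H1 where "H1 = (\<lambda>z. s * \<bar>u z\<bar> powr (s - 1) * \<bar>D1 z\<bar>)"
  define H2 where "H2 = (\<lambda>z. t * \<bar>u z\<bar> powr (t - 1) * \<bar>D2 z\<bar>)"
  define I where "I = (\<integral>z. P z \<partial>lborel)"

  have cpow: "continuous_on UNIV (\<lambda>z. \<bar>u z\<bar> powr a)" if "a > 0" for a
    using that by (intro continuous_on_powr' continuous_intros cu) auto

  have iP: "integrable lborel P"
    unfolding P_def by (rule cs_integrable[OF cpow[OF pp]]) (use R pp in auto)
  have iH1': "integrable lborel (\<lambda>z. \<bar>u z\<bar> powr (s - 1) * \<bar>D1 z\<bar>)"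
    by (rule cs_integrable) (use R s1 in \<open>auto intro!: continuous_intros cpow c1\<close>)
  have iH2': "integrable lborel (\<lambda>z. \<bar>u z\<bar> powr (t - 1) * \<bar>D2 z\<bar>)"
    by (rule cs_integrable) (use R t1 in \<open>auto intro!: continuous_intros cpow c2\<close>)
  have iH1: "integrable lborel H1" unfolding H1_def mult.assoc using iH1' by simp
  have iH2: "integrable lborel H2" unfolding H2_def mult.assoc using iH2' by simp
  have iD1: "integrable lborel (\<lambda>z. \<bar>D1 z\<bar> powr 2)"
    by (rule cs_integrable) (use R in \<open>auto intro!: continuous_intros continuous_on_powr' c1\<close>)
  have iD2: "integrable lborel (\<lambda>z. \<bar>D2 z\<bar> powr q)"
    by (rule cs_integrable) (use R q1 in \<open>auto intro!: continuous_intros continuous_on_powr' c2\<close>)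

  have prodP: "integrable (lborel \<Otimes>\<^sub>M lborel) P" using iP by (simp add: lborel_prod)
  have prodH1: "integrable (lborel \<Otimes>\<^sub>M lborel) (\<lambda>(x, y). H1 (x, y))" using iH1 by (simp add: lborel_prod)
  have prodH2: "integrable (lborel \<Otimes>\<^sub>M lborel) (\<lambda>(x, y). H2 (x, y))" using iH2 by (simp add: lborel_prod)

  define F where "F = (\<lambda>y. \<integral>x. H1 (x, y) \<partial>lborel)"
  define G where "G = (\<lambda>x. \<integral>y. H2 (x, y) \<partial>lborel)"
  have iF: "integrable lborel F" unfolding F_def by (rule lborel_pair.integrable_snd[OF prodH1])
  have iG: "integrable lborel G" unfolding G_def by (rule lborel_pair.integrable_fst[OF prodH2])
  have intF: "integral\<^sup>L lborel F = integral\<^sup>L lborel H1"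
    unfolding F_def lborel_pair.integral_snd[OF prodH1] by (simp add: lborel_prod)
  have intG: "integral\<^sup>L lborel G = integral\<^sup>L lborel H2"
    unfolding G_def lborel_pair.integral_fst[OF prodH2] by (simp add: lborel_prod)
  have intP: "I = (\<integral>x. (\<integral>y. P (x, y) \<partial>lborel) \<partial>lborel)"
    unfolding I_def lborel_pair.integral_fst'[OF prodP] by (simp add: lborel_prod)

  have bF: "\<bar>u (x, y)\<bar> powr s \<le> F y" for x y
  proof -
    have "\<bar>u (x, y)\<bar> powr s \<le> (\<integral>\<tau>. s * \<bar>u (\<tau>, y)\<bar> powr (s - 1) * \<bar>D1 (\<tau>, y)\<bar> \<partial>lborel)"
    proof (rule line_bound(2)[OF s1 d1])
      show "continuous_on UNIV (\<lambda>\<tau>. D1 (\<tau>, y))"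
        by (rule continuous_on_compose2[OF c1]) (auto intro: continuous_intros)
      fix \<tau> :: real assume "R < \<bar>\<tau>\<bar>"
      then show "u (\<tau>, y) = 0" using R[of "(\<tau>, y)"] norm_fst_le[of \<tau> y] by simp
    qed
    then show ?thesis by (simp add: F_def H1_def)
  qed
  have bG: "\<bar>u (x, y)\<bar> powr t \<le> G x" for x y
  proof -
    have "\<bar>u (x, y)\<bar> powr t \<le> (\<integral>\<tau>. t * \<bar>u (x, \<tau>)\<bar> powr (t - 1) * \<bar>D2 (x, \<tau>)\<bar> \<partial>lborel)"
    proof (rule line_bound(2)[OF t1 d2])
      show "continuous_on UNIV (\<lambda>\<tau>. D2 (x, \<tau>))"
        by (rule continuous_on_compose2[OF c2]) (auto intro: continuous_intros)
      fix \<tau> :: real assume "R < \<bar>\<tau>\<bar>"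
      then show "u (x, \<tau>) = 0" using R[of "(x, \<tau>)"] norm_snd_le[of \<tau> x] by simp
    qed
    then show ?thesis by (simp add: G_def H2_def)
  qed
  have bP: "P (x, y) \<le> G x * F y" for x y
  proof -
    have "P (x, y) = \<bar>u (x, y)\<bar> powr t * \<bar>u (x, y)\<bar> powr s"
      by (simp add: P_def st[symmetric] powr_add mult.commute)
    also have "\<dots> \<le> G x * F y"
      by (rule mult_mono[OF bG bF]) (use order_trans[OF powr_ge_zero bG[of x y]] in auto)
    finally show ?thesis .
  qed

  have "I \<le> (\<integral>x. G x * integral\<^sup>L lborel F \<partial>lborel)"
    unfolding intP
  proof (rule integral_mono)
    show "integrable lborel (\<lambda>x. \<integral>y. P (x, y) \<partial>lborel)"
      by (rule lborel_pair.integrable_fst'[OF prodP])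
    show "integrable lborel (\<lambda>x. G x * integral\<^sup>L lborel F)"
      using iG by simp
    fix x
    have "(\<integral>y. P (x, y) \<partial>lborel) \<le> (\<integral>y. G x * F y \<partial>lborel)"
    proof (rule integral_mono)
      show "integrable lborel (\<lambda>y. P (x, y))"
      proof (rule cs_integrable)
        show "continuous_on UNIV (\<lambda>y. P (x, y))"
        proof -
          have cP: "continuous_on UNIV P" using cpow[OF pp] by (simp add: P_def)
          show ?thesis by (rule continuous_on_compose2[OF cP]) (auto intro: continuous_intros)
        qed
        fix y :: real assume "R < norm y"
        then show "P (x, y) = 0" using R[of "(x, y)"] norm_snd_le[of y x] pp by (simp add: P_def)
      qed
      show "integrable lborel (\<lambda>y. G x * F y)" using iF by simp
    qed (rule bP)
    then show "(\<integral>y. P (x, y) \<partial>lborel) \<le> G x * integral\<^sup>L lborel F" by simp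
  qed
  also have "\<dots> = integral\<^sup>L lborel H2 * integral\<^sup>L lborel H1"
    using intF intG by simp
  finally have I1: "I \<le> integral\<^sup>L lborel H2 * integral\<^sup>L lborel H1" .

  define A where "A = (\<integral>x. \<bar>D1 x\<bar> powr 2 \<partial>lborel) powr (1 / 2)"
  define B where "B = (\<integral>x. \<bar>D2 x\<bar> powr q \<partial>lborel) powr (1 / q)"
  have hol1: "integral\<^sup>L lborel H1 \<le> s * (I powr (1/2) * A)"
  proof -
    have "(\<integral>z. \<bar>u z\<bar> powr (s - 1) * \<bar>D1 z\<bar> \<partial>lborel)
        \<le> (\<integral>z. (\<bar>u z\<bar> powr (s - 1)) powr 2 \<partial>lborel) powr (1/2) * (\<integral>z. \<bar>D1 z\<bar> powr 2 \<partial>lborel) powr (1/2)"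
      by (rule holder) (use iH1' iP iD1 in \<open>auto simp: powr_powr sp sp2 P_def\<close>)
    then have "(\<integral>z. \<bar>u z\<bar> powr (s - 1) * \<bar>D1 z\<bar> \<partial>lborel) \<le> I powr (1/2) * A"
      by (simp add: powr_powr sp sp2 I_def P_def A_def)
    then show ?thesis using s1 unfolding H1_def mult.assoc by simp
  qed
  have hol2: "integral\<^sup>L lborel H2 \<le> t * (I powr (1/q') * B)"
  proof -
    have "(\<integral>z. \<bar>u z\<bar> powr (t - 1) * \<bar>D2 z\<bar> \<partial>lborel)
        \<le> (\<integral>z. (\<bar>u z\<bar> powr (t - 1)) powr q' \<partial>lborel) powr (1/q') * (\<integral>z. \<bar>D2 z\<bar> powr q \<partial>lborel) powr (1/q)"
      by (rule holder) (use iH2' iP iD2 q'1 q1 qq' in \<open>auto simp: powr_powr tp P_def\<close>)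
    then have "(\<integral>z. \<bar>u z\<bar> powr (t - 1) * \<bar>D2 z\<bar> \<partial>lborel) \<le> I powr (1/q') * B"
      by (simp add: powr_powr tp I_def P_def B_def)
    then show ?thesis using t1 unfolding H2_def mult.assoc by simp
  qed
  have H1nn: "integral\<^sup>L lborel H1 \<ge> 0" unfolding H1_def using s1 by (intro Bochner_Integration.integral_nonneg mult_nonneg_nonneg) auto
  have I2: "I \<le> (t * (I powr (1/q') * B)) * (s * (I powr (1/2) * A))"
    using I1 mult_mono[OF hol2 hol1] H1nn t1 by (smt (verit) A_def B_def mult_nonneg_nonneg powr_ge_zero)
  have A0: "A \<ge> 0" and B0: "B \<ge> 0" by (simp_all add: A_def B_def)
  have I0: "I \<ge> 0" unfolding I_def P_def by (intro Bochner_Integration.integral_nonneg) auto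
  have main: "c * I powr e \<le> A * B"
  proof (cases "I = 0")
    case True
    then show ?thesis using A0 B0 by simp
  next
    case False
    with I0 have Ipos: "I > 0" by simp
    define X where "X = I powr (1/2) * I powr (1/q')"
    have Xpos: "X > 0" using Ipos by (simp add: X_def)
    have "I = I powr e * X"
      using Ipos eexp by (simp add: X_def flip: powr_add) (simp add: add.assoc)
    then have "I powr e * X \<le> (s * t * A * B) * X" using I2 by (simp add: X_def algebra_simps)
    then have "I powr e \<le> s * t * A * B" using Xpos by simp
    then have "c * I powr e \<le> c * (s * t * A * B)" using cpos by simp
    also have "\<dots> = A * B" using cst by (simp add: algebra_simps)
    finally show ?thesis .
  qed
  have eqI: "(\<integral>x. \<bar>u x\<bar> powr (4 * q / (2 - q)) \<partial>lborel) = I" by (simp add: I_def P_def p_def)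
  show ?thesis
    using cpos main unfolding eqI c_def e_def A_def B_def D1_def D2_def by simp
qed


end
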